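(* Let $t\ge1$ and let $h:\{0,1\}^t\times\{0,1\}^t\to\{0,1\}$ be a Boolean function with $\mathrm{Cov}_0(h)=c$ and $\mathrm{UCov}_1(h)=m$. Then there exists a graph $G$ on at most $2^{2t}$ vertices with $\mathrm{bp}(G)\le m^2$ and $\chi(G)\ge\sqrt{c}$.
   Context: A $b$-monochromatic rectangle for $h$ is a set $A\times B$ with $A,B\subseteq\{0,1\}^t$ on which $h\equiv b$. $\mathrm{Cov}_b(h)$ is the minimum number of $b$-monochromatic rectangles covering $h^{-1}(b)$; $\mathrm{UCov}_b(h)$ is the minimum number of pairwise disjoint $b$-monochromatic rectangles partitioning $h^{-1}(b)$. For a graph $G$, $\chi(G)$ is the chromatic number and $\mathrm{bp}(G)$ is the minimum number of bicliques (complete bipartite subgraphs) whose edge sets partition $E(G)$. *)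

theory Defs
  imports Complex_Main
begin

text \<open>The Boolean cube {0,1}^t, encoded as bool lists of length t (False = 0, True = 1).\<close>
definition cube :: "nat \<Rightarrow> bool list set" where
  "cube t = {xs. length xs = t}"

definition mono_rect :: "(bool list \<Rightarrow> bool list \<Rightarrow> bool) \<Rightarrow> nat \<Rightarrow> bool
    \<Rightarrow> bool list set \<Rightarrow> bool list set \<Rightarrow> bool" where
  "mono_rect h t b A B \<longleftrightarrow> A \<subseteq> cube t \<and> B \<subseteq> cube t \<and> (\<forall>x\<in>A. \<forall>y\<in>B. h x y = b)"

definition preimage_pts :: "(bool list \<Rightarrow> bool list \<Rightarrow> bool) \<Rightarrow> nat \<Rightarrow> bool \<Rightarrow> (bool list \<times> bool list) set" where
  "preimage_pts h t b = {(x, y). x \<in> cube t \<and> y \<in> cube t \<and> h x y = b}"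

definition Cov :: "(bool list \<Rightarrow> bool list \<Rightarrow> bool) \<Rightarrow> nat \<Rightarrow> bool \<Rightarrow> nat" where
  "Cov h t b = (LEAST k. \<exists>R :: nat \<Rightarrow> bool list set \<times> bool list set.
      (\<forall>i<k. mono_rect h t b (fst (R i)) (snd (R i))) \<and>
      preimage_pts h t b \<subseteq> (\<Union>i<k. fst (R i) \<times> snd (R i)))"

definition UCov :: "(bool list \<Rightarrow> bool list \<Rightarrow> bool) \<Rightarrow> nat \<Rightarrow> bool \<Rightarrow> nat" where
  "UCov h t b = (LEAST k. \<exists>R :: nat \<Rightarrow> bool list set \<times> bool list set.
      (\<forall>i<k. mono_rect h t b (fst (R i)) (snd (R i))) \<and>
      (\<forall>i<k. \<forall>j<k. i \<noteq> j \<longrightarrow> (fst (R i) \<times> snd (R i)) \<inter> (fst (R j) \<times> snd (R j)) = {}) \<and>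
      preimage_pts h t b = (\<Union>i<k. fst (R i) \<times> snd (R i)))"

definition simple_graph :: "'v set \<Rightarrow> 'v set set \<Rightarrow> bool" where
  "simple_graph V E \<longleftrightarrow> finite V \<and> (\<forall>e\<in>E. \<exists>x y. x \<noteq> y \<and> x \<in> V \<and> y \<in> V \<and> e = {x, y})"

definition chromatic_number :: "'v set \<Rightarrow> 'v set set \<Rightarrow> nat" where
  "chromatic_number V E = (LEAST k. \<exists>f :: 'v \<Rightarrow> nat.
      (\<forall>v\<in>V. f v < k) \<and> (\<forall>x y. {x, y} \<in> E \<longrightarrow> f x \<noteq> f y))"

definition biclique_edges :: "'v set \<Rightarrow> 'v set \<Rightarrow> 'v set set" where
  "biclique_edges X Y = {{x, y} | x y. x \<in> X \<and> y \<in> Y}"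

definition is_biclique :: "'v set \<Rightarrow> 'v set set \<Rightarrow> 'v set \<Rightarrow> 'v set \<Rightarrow> bool" where
  "is_biclique V E X Y \<longleftrightarrow> X \<subseteq> V \<and> Y \<subseteq> V \<and> X \<inter> Y = {} \<and> biclique_edges X Y \<subseteq> E"

definition bp :: "'v set \<Rightarrow> 'v set set \<Rightarrow> nat" where
  "bp V E = (LEAST k. \<exists>B :: nat \<Rightarrow> 'v set \<times> 'v set.
      (\<forall>i<k. is_biclique V E (fst (B i)) (snd (B i))) \<and>
      (\<forall>i<k. \<forall>j<k. i \<noteq> j \<longrightarrow>
          biclique_edges (fst (B i)) (snd (B i)) \<inter> biclique_edges (fst (B j)) (snd (B j)) = {}) \<and>
      (\<Union>i<k. biclique_edges (fst (B i)) (snd (B i))) = E)"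

end

theory Submission
  imports Defs "HOL-Library.Countable"
begin

definition rg :: "'v set \<Rightarrow> ('v \<Rightarrow> 'v \<Rightarrow> bool) \<Rightarrow> 'v set set" where
  "rg V P = {{a, b} | a b. a \<in> V \<and> b \<in> V \<and> a \<noteq> b \<and> P a b}"

lemma rg_simple: "finite V \<Longrightarrow> simple_graph V (rg V P)"
  unfolding simple_graph_def rg_def by blast

lemma rg_mem: "{x,y} \<in> rg V P \<longleftrightarrow> x \<in> V \<and> y \<in> V \<and> x \<noteq> y \<and> (P x y \<or> P y x)"
  unfolding rg_def by (auto simp: doubleton_eq_iff)

lemma rg_memE: "e \<in> rg V P \<Longrightarrow> (\<And>a b. e = {a,b} \<Longrightarrow> a \<in> V \<Longrightarrow> b \<in> V \<Longrightarrow> a \<noteq> b \<Longrightarrow> P a b \<Longrightarrow> Q) \<Longrightarrow> Q"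
  unfolding rg_def by blast

definition colors :: "'v set \<Rightarrow> 'v set set \<Rightarrow> nat \<Rightarrow> ('v \<Rightarrow> nat) \<Rightarrow> bool" where
  "colors V E k f \<longleftrightarrow> (\<forall>v\<in>V. f v < k) \<and> (\<forall>x y. {x, y} \<in> E \<longrightarrow> f x \<noteq> f y)"

lemma chrom_le: "colors V E k f \<Longrightarrow> chromatic_number V E \<le> k"
  unfolding chromatic_number_def colors_def by (rule Least_le) blast

lemma chrom_ex:
  assumes "simple_graph V E"
  shows "\<exists>f. colors V E (chromatic_number V E) f"
proof -
  have fin: "finite V" using assms unfolding simple_graph_def by blast
  obtain f n where fn: "f ` V = {i::nat. i < n}" "inj_on f V"
    using finite_imp_inj_to_nat_seg[OF fin] by blast
  have "colors V E n f"
    unfolding colors_def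
  proof (intro conjI allI impI ballI)
    fix v assume "v \<in> V" then show "f v < n" using fn by blast
  next
    fix x y assume "{x,y} \<in> E"
    then obtain a b where "a \<noteq> b" "a \<in> V" "b \<in> V" "{x,y} = {a,b}"
      using assms unfolding simple_graph_def by blast
    then have "x \<noteq> y" "x \<in> V" "y \<in> V" by (auto simp: doubleton_eq_iff)
    then show "f x \<noteq> f y" using fn(2) by (meson inj_on_def)
  qed
  then have "\<exists>k f. colors V E k f" by blast
  then show ?thesis unfolding chromatic_number_def colors_def by (rule LeastI_ex)
qed

lemma Cov_le: "(\<forall>i<k. mono_rect h t b (fst (R i)) (snd (R i))) \<Longrightarrow>
   preimage_pts h t b \<subseteq> (\<Union>i<k. fst (R i) \<times> snd (R i)) \<Longrightarrow> Cov h t b \<le> k"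
  unfolding Cov_def by (rule Least_le) blast

lemma bp_le: "(\<forall>i<k. is_biclique V E (fst (B i)) (snd (B i))) \<Longrightarrow>
      (\<forall>i<k. \<forall>j<k. i \<noteq> j \<longrightarrow>
          biclique_edges (fst (B i)) (snd (B i)) \<inter> biclique_edges (fst (B j)) (snd (B j)) = {}) \<Longrightarrow>
      (\<Union>i<k. biclique_edges (fst (B i)) (snd (B i))) = E \<Longrightarrow> bp V E \<le> k"
  unfolding bp_def by (rule Least_le) blast

lemma finite_cube: "finite (cube t)" and card_cube: "card (cube t) = 2 ^ t"
proof -
  have e: "cube t = {xs. set xs \<subseteq> (UNIV::bool set) \<and> length xs = t}" unfolding cube_def by blast
  show "finite (cube t)" unfolding e by (rule finite_lists_length_eq) simp
  show "card (cube t) = 2 ^ t" unfolding e by (subst card_lists_length_eq) simp_all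
qed

lemma finite_pre: "finite (preimage_pts h t b)"
proof -
  have "preimage_pts h t b \<subseteq> cube t \<times> cube t" unfolding preimage_pts_def by blast
  then show ?thesis using finite_cube by (meson finite_SigmaI rev_finite_subset)
qed

lemma card_pre: "card (preimage_pts h t b) \<le> 2 ^ (2 * t)"
proof -
  have "preimage_pts h t b \<subseteq> cube t \<times> cube t" unfolding preimage_pts_def by blast
  then have "card (preimage_pts h t b) \<le> card (cube t \<times> cube t)"
    using finite_cube by (intro card_mono) auto
  also have "\<dots> = 2 ^ (2 * t)" by (simp add: card_cartesian_product card_cube power_add mult_2 flip: power_add)
  finally show ?thesis .
qed

lemma sing_disj: "(a::'a \<times> 'b) \<noteq> b \<Longrightarrow> ({fst a} \<times> {snd a}) \<inter> ({fst b} \<times> {snd b}) = {}"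
  by (cases a; cases b) auto

lemma UCov_ex: "\<exists>R :: nat \<Rightarrow> bool list set \<times> bool list set.
      (\<forall>i<UCov h t b. mono_rect h t b (fst (R i)) (snd (R i))) \<and>
      (\<forall>i<UCov h t b. \<forall>j<UCov h t b. i \<noteq> j \<longrightarrow> (fst (R i) \<times> snd (R i)) \<inter> (fst (R j) \<times> snd (R j)) = {}) \<and>
      preimage_pts h t b = (\<Union>i<UCov h t b. fst (R i) \<times> snd (R i))"
proof -
  obtain ps where ps: "set ps = preimage_pts h t b" "distinct ps"
    using finite_distinct_list[OF finite_pre] by blast
  define R where "R i = ({fst (ps ! i)}, {snd (ps ! i)})" for i
  have "(\<forall>i<length ps. mono_rect h t b (fst (R i)) (snd (R i))) \<and>
      (\<forall>i<length ps. \<forall>j<length ps. i \<noteq> j \<longrightarrow> (fst (R i) \<times> snd (R i)) \<inter> (fst (R j) \<times> snd (R j)) = {}) \<and>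
      preimage_pts h t b = (\<Union>i<length ps. fst (R i) \<times> snd (R i))"
  proof (intro conjI allI impI)
    fix i assume i: "i < length ps"
    then have "ps ! i \<in> preimage_pts h t b" using nth_mem[OF i] ps(1) by simp
    then show "mono_rect h t b (fst (R i)) (snd (R i))"
      unfolding R_def mono_rect_def preimage_pts_def by auto
  next
    fix i j assume "i < length ps" "j < length ps" "i \<noteq> j"
    then have "ps ! i \<noteq> ps ! j" using ps(2) by (simp add: nth_eq_iff_index_eq)
    then show "(fst (R i) \<times> snd (R i)) \<inter> (fst (R j) \<times> snd (R j)) = {}"
      unfolding R_def using sing_disj by simp
  next
    show "preimage_pts h t b = (\<Union>i<length ps. fst (R i) \<times> snd (R i))"
    proof
      show "preimage_pts h t b \<subseteq> (\<Union>i<length ps. fst (R i) \<times> snd (R i))"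
      proof
        fix p assume "p \<in> preimage_pts h t b"
        then have "p \<in> set ps" using ps(1) by simp
        then obtain i where i: "i < length ps" "ps ! i = p" by (auto simp: in_set_conv_nth)
        have "p \<in> fst (R i) \<times> snd (R i)" unfolding R_def i(2) by (simp add: mem_Times_iff)
        then show "p \<in> (\<Union>i<length ps. fst (R i) \<times> snd (R i))" using i(1) by blast
      qed
    next
      show "(\<Union>i<length ps. fst (R i) \<times> snd (R i)) \<subseteq> preimage_pts h t b"
      proof
        fix p assume "p \<in> (\<Union>i<length ps. fst (R i) \<times> snd (R i))"
        then obtain i where i: "i < length ps" "p \<in> fst (R i) \<times> snd (R i)" by blast
        then have "p = ps ! i" unfolding R_def by (simp add: mem_Times_iff prod_eq_iff)
        then show "p \<in> preimage_pts h t b" using nth_mem[OF i(1)] ps(1) by simp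
      qed
    qed
  qed
  note H = this
  have "\<exists>(k::nat) R. (\<forall>i<k. mono_rect h t b (fst (R i)) (snd (R i))) \<and>
      (\<forall>i<k. \<forall>j<k. i \<noteq> j \<longrightarrow> (fst (R i) \<times> snd (R i)) \<inter> (fst (R j) \<times> snd (R j)) = {}) \<and>
      preimage_pts h t b = (\<Union>i<k. fst (R i) \<times> snd (R i))" using H by (intro exI) assumption
  then show ?thesis unfolding UCov_def by (rule LeastI_ex)
qed


locale hcfg =
  fixes h :: "bool list \<Rightarrow> bool list \<Rightarrow> bool" and t :: nat and Z :: "'v set"
    and px py :: "'v \<Rightarrow> bool list" and A B :: "nat \<Rightarrow> bool list set" and m :: nat
  assumes finZ: "finite Z"
  and Zc: "\<And>u. u \<in> Z \<Longrightarrow> px u \<in> cube t \<and> py u \<in> cube t \<and> \<not> h (px u) (py u)"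
  and mono: "\<And>i x y. i < m \<Longrightarrow> x \<in> A i \<Longrightarrow> y \<in> B i \<Longrightarrow> h x y"
  and disj: "\<And>i j x y. i < m \<Longrightarrow> j < m \<Longrightarrow> x \<in> A i \<Longrightarrow> y \<in> B i \<Longrightarrow> x \<in> A j \<Longrightarrow> y \<in> B j \<Longrightarrow> i = j"
  and cov: "\<And>x y. x \<in> cube t \<Longrightarrow> y \<in> cube t \<Longrightarrow> h x y \<Longrightarrow> \<exists>i<m. x \<in> A i \<and> y \<in> B i"
begin

definition Dr where "Dr u v = h (px u) (py v)"
definition OrR where "OrR u v = (Dr u v \<or> Dr v u)"
definition AndR where "AndR u v = (Dr u v \<and> Dr v u)"

lemma bp_or:
  assumes W: "W \<subseteq> Z" and ind: "\<And>u v. u \<in> W \<Longrightarrow> v \<in> W \<Longrightarrow> u \<noteq> v \<Longrightarrow> \<not> AndR u v"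
  shows "bp W (rg W OrR) \<le> m"
proof -
  define BB where "BB i = ({u\<in>W. px u \<in> A i}, {v\<in>W. py v \<in> B i})" for i
  have XY: "fst (BB i) \<inter> snd (BB i) = {}" if "i < m" for i
  proof (rule ccontr)
    assume "fst (BB i) \<inter> snd (BB i) \<noteq> {}"
    then obtain u where "u \<in> W" "px u \<in> A i" "py u \<in> B i" unfolding BB_def by auto
    then show False using mono[OF that] Zc W by blast
  qed
  have edge: "{x,y} \<in> rg W OrR" if "i < m" "x \<in> fst (BB i)" "y \<in> snd (BB i)" for i x y
  proof -
    have "x \<noteq> y" using XY[OF that(1)] that(2,3) by blast
    moreover have "Dr x y" using that mono unfolding BB_def Dr_def by auto
    ultimately show ?thesis using that unfolding rg_mem BB_def OrR_def by auto
  qed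
  show ?thesis
  proof (rule bp_le, intro allI impI)
    fix i assume i: "i < m"
    show "is_biclique W (rg W OrR) (fst (BB i)) (snd (BB i))"
      unfolding is_biclique_def biclique_edges_def using XY[OF i] edge[OF i]
      by (auto simp: BB_def)
  next
    show "\<forall>i<m. \<forall>j<m. i \<noteq> j \<longrightarrow> biclique_edges (fst (BB i)) (snd (BB i)) \<inter> biclique_edges (fst (BB j)) (snd (BB j)) = {}"
    proof (intro allI impI)
      fix i j assume ij: "i < m" "j < m" "i \<noteq> j"
      show "biclique_edges (fst (BB i)) (snd (BB i)) \<inter> biclique_edges (fst (BB j)) (snd (BB j)) = {}"
      proof (rule ccontr)
        assume "biclique_edges (fst (BB i)) (snd (BB i)) \<inter> biclique_edges (fst (BB j)) (snd (BB j)) \<noteq> {}"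
        then obtain ee where e1: "ee \<in> biclique_edges (fst (BB i)) (snd (BB i))"
          and e2: "ee \<in> biclique_edges (fst (BB j)) (snd (BB j))" by blast
        from e1 obtain x y where x: "ee = {x,y}" "x \<in> fst (BB i)" "y \<in> snd (BB i)"
          unfolding biclique_edges_def by blast
        from e2 obtain x' y' where x': "ee = {x',y'}" "x' \<in> fst (BB j)" "y' \<in> snd (BB j)"
          unfolding biclique_edges_def by blast
        have e: "{x,y} = {x',y'}" "x \<in> fst (BB i)" "y \<in> snd (BB i)"
          "x' \<in> fst (BB j)" "y' \<in> snd (BB j)" using x x' by auto
        from e(1) consider "x = x' \<and> y = y'" | "x = y' \<and> y = x'" by (metis doubleton_eq_iff)
        then show False
        proof cases
          case 1
          then show False using e disj[OF ij(1,2)] ij(3) unfolding BB_def by auto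
        next
          case 2
          have "x \<noteq> y" using XY[OF ij(1)] e(2,3) by blast
          moreover have "Dr x y" "Dr y x" using e 2 mono ij unfolding BB_def Dr_def by auto
          moreover have "x \<in> W" "y \<in> W" using e unfolding BB_def by auto
          ultimately show False using ind unfolding AndR_def by blast
        qed
      qed
    qed
  next
    show "(\<Union>i<m. biclique_edges (fst (BB i)) (snd (BB i))) = rg W OrR"
    proof
      show "(\<Union>i<m. biclique_edges (fst (BB i)) (snd (BB i))) \<subseteq> rg W OrR"
        using edge unfolding biclique_edges_def by blast
    next
      show "rg W OrR \<subseteq> (\<Union>i<m. biclique_edges (fst (BB i)) (snd (BB i)))"
      proof
        fix e assume "e \<in> rg W OrR"
        then obtain a b where ab: "e = {a,b}" "a \<in> W" "b \<in> W" "a \<noteq> b" "OrR a b" by (rule rg_memE)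
        have gen: "{x,y} \<in> (\<Union>i<m. biclique_edges (fst (BB i)) (snd (BB i)))"
          if xy: "x \<in> W" "y \<in> W" "Dr x y" for x y
        proof -
          obtain i where "i < m" "px x \<in> A i" "py y \<in> B i"
            using cov[of "px x" "py y"] Zc xy W unfolding Dr_def by blast
          then show ?thesis using xy unfolding biclique_edges_def BB_def by auto
        qed
        show "e \<in> (\<Union>i<m. biclique_edges (fst (BB i)) (snd (BB i)))"
          proof (cases "Dr a b")
          case True then show ?thesis using ab gen[of a b] by simp
        next
          case False
          then have "Dr b a" using ab(5) unfolding OrR_def by blast
          moreover have "e = {b,a}" using ab(1) by blast
          ultimately show ?thesis using ab gen[of b a] by simp
        qed
      qed
    qed
  qed
qed

lemma cov_or:
  assumes surj: "preimage_pts h t False \<subseteq> (\<lambda>u. (px u, py u)) ` Z"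
  and col: "colors Z (rg Z OrR) k f"
  shows "Cov h t False \<le> k"
proof -
  define R where "R a = (px ` {u\<in>Z. f u = a}, py ` {u\<in>Z. f u = a})" for a
  have 1: "\<forall>a<k. mono_rect h t False (fst (R a)) (snd (R a))"
  proof (intro allI impI)
    fix a assume "a < k"
    have "h (px u) (py v) = False" if "u \<in> Z" "v \<in> Z" "f u = a" "f v = a" for u v
    proof (cases "u = v")
      case True then show ?thesis using Zc that by blast
    next
      case False
      show ?thesis
      proof (rule ccontr)
        assume "h (px u) (py v) \<noteq> False"
        then have "OrR u v" unfolding OrR_def Dr_def by simp
        then have "{u,v} \<in> rg Z OrR" using that False by (simp add: rg_mem)
        then have "f u \<noteq> f v" using col by (simp add: colors_def)
        then show False using that by simp
      qed
    qed
    then show "mono_rect h t False (fst (R a)) (snd (R a))"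
      unfolding mono_rect_def R_def using Zc by auto
  qed
  have 2: "preimage_pts h t False \<subseteq> (\<Union>a<k. fst (R a) \<times> snd (R a))"
  proof
    fix p assume "p \<in> preimage_pts h t False"
    then obtain u where u: "u \<in> Z" "p = (px u, py u)" using surj by blast
    then have "f u < k" using col unfolding colors_def by blast
    moreover have "p \<in> fst (R (f u)) \<times> snd (R (f u))" unfolding R_def using u by auto
    ultimately show "p \<in> (\<Union>a<k. fst (R a) \<times> snd (R a))" by blast
  qed
  show ?thesis by (rule Cov_le[OF 1 2])
qed

lemma divmod_enc: "j < (m::nat) \<Longrightarrow> (i * m + j) div m = i \<and> (i * m + j) mod m = j"
  by simp

lemma enc_less: "i < (m::nat) \<Longrightarrow> j < m \<Longrightarrow> i * m + j < m ^ 2"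
proof -
  assume a: "i < m" "j < m"
  have "i * m + j < i * m + m" using a by simp
  also have "\<dots> = (i + 1) * m" by simp
  also have "\<dots> \<le> m * m" using a by (intro mult_le_mono1) simp
  finally show ?thesis by (simp add: power2_eq_square)
qed

lemma bp_and: "bp Z (rg Z AndR) \<le> m ^ 2"
proof -
  define BB where "BB n = (if n div m < n mod m then
     ({u\<in>Z. px u \<in> A (n div m) \<and> py u \<in> B (n mod m)},
      {v\<in>Z. px v \<in> A (n mod m) \<and> py v \<in> B (n div m)}) else ({},{}))" for n
  have im: "n div m < m" "n mod m < m" if "n < m ^ 2" for n
  proof -
    have "m > 0" using that by (cases m) auto
    then show "n mod m < m" by simp
    show "n div m < m" using that by (simp add: power2_eq_square less_mult_imp_div_less)
  qed
  have mem: "n div m < n mod m \<and> u \<in> Z \<and> px u \<in> A (n div m) \<and> py u \<in> B (n mod m)"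
    if "u \<in> fst (BB n)" for n u
    using that unfolding BB_def by (auto split: if_splits)
  have mem2: "n div m < n mod m \<and> v \<in> Z \<and> px v \<in> A (n mod m) \<and> py v \<in> B (n div m)"
    if "v \<in> snd (BB n)" for n v
    using that unfolding BB_def by (auto split: if_splits)
  have XY: "fst (BB n) \<inter> snd (BB n) = {}" if "n < m ^ 2" for n
  proof (rule ccontr)
    assume "fst (BB n) \<inter> snd (BB n) \<noteq> {}"
    then obtain u where "u \<in> fst (BB n)" "u \<in> snd (BB n)" by blast
    then have "n div m < n mod m" "px u \<in> A (n div m)" "py u \<in> B (n mod m)"
      "px u \<in> A (n mod m)" "py u \<in> B (n div m)" using mem mem2 by blast+
    then show False using disj[OF im[OF that]] by auto
  qed
  have edge: "{x,y} \<in> rg Z AndR" if "n < m ^ 2" "x \<in> fst (BB n)" "y \<in> snd (BB n)" for n x y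
  proof -
    have "x \<noteq> y" using XY[OF that(1)] that(2,3) by blast
    moreover have "Dr x y" using mem[OF that(2)] mem2[OF that(3)] mono im[OF that(1)]
      unfolding Dr_def by blast
    moreover have "Dr y x" using mem[OF that(2)] mem2[OF that(3)] mono im[OF that(1)]
      unfolding Dr_def by blast
    moreover have "x \<in> Z" "y \<in> Z" using mem[OF that(2)] mem2[OF that(3)] by blast+
    ultimately show ?thesis unfolding rg_mem AndR_def by blast
  qed
  show ?thesis
  proof (rule bp_le, intro allI impI)
    fix n assume n: "n < m ^ 2"
    show "is_biclique Z (rg Z AndR) (fst (BB n)) (snd (BB n))"
      unfolding is_biclique_def
    proof (intro conjI)
      show "fst (BB n) \<subseteq> Z" using mem by blast
      show "snd (BB n) \<subseteq> Z" using mem2 by blast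
      show "fst (BB n) \<inter> snd (BB n) = {}" by (rule XY[OF n])
      show "biclique_edges (fst (BB n)) (snd (BB n)) \<subseteq> rg Z AndR"
        unfolding biclique_edges_def using edge[OF n] by blast
    qed
  next
    show "\<forall>i<m^2. \<forall>j<m^2. i \<noteq> j \<longrightarrow> biclique_edges (fst (BB i)) (snd (BB i)) \<inter> biclique_edges (fst (BB j)) (snd (BB j)) = {}"
    proof (intro allI impI)
      fix n n' assume nn: "n < m^2" "n' < m^2" "n \<noteq> n'"
      show "biclique_edges (fst (BB n)) (snd (BB n)) \<inter> biclique_edges (fst (BB n')) (snd (BB n')) = {}"
      proof (rule ccontr)
        assume "biclique_edges (fst (BB n)) (snd (BB n)) \<inter> biclique_edges (fst (BB n')) (snd (BB n')) \<noteq> {}"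
        then obtain ee where e1: "ee \<in> biclique_edges (fst (BB n)) (snd (BB n))"
          and e2: "ee \<in> biclique_edges (fst (BB n')) (snd (BB n'))" by blast
        from e1 obtain x y where x: "ee = {x,y}" "x \<in> fst (BB n)" "y \<in> snd (BB n)"
          unfolding biclique_edges_def by blast
        from e2 obtain x' y' where x': "ee = {x',y'}" "x' \<in> fst (BB n')" "y' \<in> snd (BB n')"
          unfolding biclique_edges_def by blast
        have exy: "{x,y} = {x',y'}" using x x' by simp
        note a = mem[OF x(2)] mem2[OF x(3)] mem[OF x'(2)] mem2[OF x'(3)]
        note i1 = im[OF nn(1)] and i2 = im[OF nn(2)]
        from exy consider "x = x' \<and> y = y'" | "x = y' \<and> y = x'" by (metis doubleton_eq_iff)
        then show False
        proof cases
          case 1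
          have "n div m = n' div m" using a 1 disj[OF i1(1) i2(1), of "px x" "py y"] by auto
          moreover have "n mod m = n' mod m" using a 1 disj[OF i1(2) i2(2), of "px y" "py x"] by auto
          ultimately have "n = n'" by (metis div_mult_mod_eq)
          then show False using nn(3) by blast
        next
          case 2
          have "n div m = n' mod m" using a 2 disj[OF i1(1) i2(2), of "px x" "py y"] by auto
          moreover have "n mod m = n' div m" using a 2 disj[OF i1(2) i2(1), of "px y" "py x"] by auto
          ultimately show False using a by linarith
        qed
      qed
    qed
  next
    show "(\<Union>n<m^2. biclique_edges (fst (BB n)) (snd (BB n))) = rg Z AndR"
    proof
      show "(\<Union>n<m^2. biclique_edges (fst (BB n)) (snd (BB n))) \<subseteq> rg Z AndR"
        using edge unfolding biclique_edges_def by blast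
    next
      show "rg Z AndR \<subseteq> (\<Union>n<m^2. biclique_edges (fst (BB n)) (snd (BB n)))"
      proof
        fix e assume "e \<in> rg Z AndR"
        then obtain a b where ab: "e = {a,b}" "a \<in> Z" "b \<in> Z" "a \<noteq> b" "AndR a b" by (rule rg_memE)
        obtain i where i: "i < m" "px a \<in> A i" "py b \<in> B i"
          using cov[of "px a" "py b"] Zc ab(2,3,5) unfolding AndR_def Dr_def by blast
        obtain j where j: "j < m" "px b \<in> A j" "py a \<in> B j"
          using cov[of "px b" "py a"] Zc ab(2,3,5) unfolding AndR_def Dr_def by blast
        have "i \<noteq> j"
        proof
          assume "i = j"
          then have "h (px a) (py a)" using mono i j by blast
          then show False using Zc ab(2) by blast
        qed
        then consider "i < j" | "j < i" by linarith
        then show "e \<in> (\<Union>n<m^2. biclique_edges (fst (BB n)) (snd (BB n)))"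
        proof cases
          case 1
          define n where "n = i * m + j"
          have n: "n < m^2" "n div m = i" "n mod m = j" unfolding n_def
            using enc_less[OF i(1) j(1)] divmod_enc[OF j(1)] by auto
          have "a \<in> fst (BB n)" "b \<in> snd (BB n)" unfolding BB_def using n 1 i j ab by auto
          then have "e \<in> biclique_edges (fst (BB n)) (snd (BB n))"
            unfolding biclique_edges_def ab(1) by blast
          then show ?thesis using n(1) by blast
        next
          case 2
          define n where "n = j * m + i"
          have n: "n < m^2" "n div m = j" "n mod m = i" unfolding n_def
            using enc_less[OF j(1) i(1)] divmod_enc[OF i(1)] by auto
          have "b \<in> fst (BB n)" "a \<in> snd (BB n)" unfolding BB_def using n 2 i j ab by auto
          then have "{b,a} \<in> biclique_edges (fst (BB n)) (snd (BB n))"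
            unfolding biclique_edges_def by blast
          moreover have "e = {b,a}" using ab(1) by blast
          ultimately show ?thesis using n(1) by blast
        qed
      qed
    qed
  qed
qed

end

lemma real_arith_step:
  fixes c q M :: nat
  assumes "c \<le> M * q" "\<not> sqrt (real c) \<le> real q"
  shows "sqrt (real c) \<le> real M"
proof (rule ccontr)
  assume "\<not> sqrt (real c) \<le> real M"
  then have M: "real M < sqrt (real c)" by simp
  have q: "real q \<le> sqrt (real c)" using assms(2) by simp
  have pos: "sqrt (real c) > 0" using assms(2) by (meson not_le of_nat_0_le_iff order_le_less_trans)
  have "real M * real q \<le> real M * sqrt (real c)" using q by (intro mult_left_mono) simp_all
  also have "\<dots> < sqrt (real c) * sqrt (real c)" using M pos by (intro mult_strict_right_mono)
  also have "\<dots> = real c" by simp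
  finally have "real (M * q) < real c" by simp
  then show False using assms(1) by linarith
qed

theorem lemma3p5:
  fixes h :: "bool list \<Rightarrow> bool list \<Rightarrow> bool" and t c m :: nat
  assumes "t \<ge> 1"
    and "Cov h t False = c"
    and "UCov h t True = m"
  shows "\<exists>(V :: nat set) (E :: nat set set). simple_graph V E \<and> card V \<le> 2 ^ (2 * t) \<and>
           bp V E \<le> m ^ 2 \<and> real (chromatic_number V E) \<ge> sqrt (real c)"
proof -
  obtain R where R1: "\<forall>i<m. mono_rect h t True (fst (R i)) (snd (R i))"
    and R2: "\<forall>i<m. \<forall>j<m. i \<noteq> j \<longrightarrow> (fst (R i) \<times> snd (R i)) \<inter> (fst (R j) \<times> snd (R j)) = {}"
    and R3: "preimage_pts h t True = (\<Union>i<m. fst (R i) \<times> snd (R i))"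
    using UCov_ex[of h t True] unfolding assms(3) by blast
  define A where "A i = fst (R i)" for i
  define B where "B i = snd (R i)" for i
  define Z0 where "Z0 = preimage_pts h t False"
  define Z :: "nat set" where "Z = to_nat ` Z0"
  define px where "px u = fst (from_nat u :: bool list \<times> bool list)" for u :: nat
  define py where "py u = snd (from_nat u :: bool list \<times> bool list)" for u :: nat
  have finZ: "finite Z" unfolding Z_def Z0_def using finite_pre by blast
  have cardZ: "card Z \<le> 2 ^ (2 * t)"
    using card_image_le[OF finite_pre[of h t False], of to_nat] card_pre[of h t False]
    unfolding Z_def Z0_def by linarith
  interpret H: hcfg h t Z px py A B m
  proof
    show "finite Z" by (rule finZ)
  next
    fix u assume "u \<in> Z"
    then obtain p where p: "p \<in> Z0" "u = to_nat p" unfolding Z_def by blast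
    then have "px u = fst p" "py u = snd p" unfolding px_def py_def by simp_all
    then show "px u \<in> cube t \<and> py u \<in> cube t \<and> \<not> h (px u) (py u)"
      using p(1) unfolding Z0_def preimage_pts_def by auto
  next
    fix i x y assume "i < m" "x \<in> A i" "y \<in> B i"
    then show "h x y" using R1 unfolding A_def B_def mono_rect_def by blast
  next
    fix i j x y assume a: "i < m" "j < m" "x \<in> A i" "y \<in> B i" "x \<in> A j" "y \<in> B j"
    show "i = j"
    proof (rule ccontr)
      assume "i \<noteq> j"
      then have "(fst (R i) \<times> snd (R i)) \<inter> (fst (R j) \<times> snd (R j)) = {}" using R2 a by blast
      then show False using a unfolding A_def B_def by blast
    qed
  next
    fix x y assume "x \<in> cube t" "y \<in> cube t" "h x y"
    then have "(x, y) \<in> preimage_pts h t True" unfolding preimage_pts_def by simp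
    then show "\<exists>i<m. x \<in> A i \<and> y \<in> B i" unfolding R3 A_def B_def by blast
  qed
  have surj: "preimage_pts h t False \<subseteq> (\<lambda>u. (px u, py u)) ` Z"
  proof
    fix p assume "p \<in> preimage_pts h t False"
    then have "to_nat p \<in> Z" unfolding Z_def Z0_def by blast
    moreover have "p = (px (to_nat p), py (to_nat p))" unfolding px_def py_def by simp
    ultimately show "p \<in> (\<lambda>u. (px u, py u)) ` Z" by blast
  qed
  define GA where "GA = rg Z H.AndR"
  define q where "q = chromatic_number Z GA"
  obtain g where g: "colors Z GA q g" unfolding q_def GA_def using chrom_ex[OF rg_simple[OF finZ]] by blast
  show ?thesis
  proof (cases "sqrt (real c) \<le> real q")
    case True
    have "simple_graph Z GA" unfolding GA_def by (rule rg_simple[OF finZ])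
    moreover have "bp Z GA \<le> m ^ 2" unfolding GA_def by (rule H.bp_and)
    ultimately show ?thesis using cardZ True unfolding q_def by blast
  next
    case False
    define W where "W a = {u\<in>Z. g u = a}" for a
    have finW: "finite (W a)" for a unfolding W_def using finZ by simp
    define chi where "chi a = chromatic_number (W a) (rg (W a) H.OrR)" for a
    have "\<forall>a. \<exists>f. colors (W a) (rg (W a) H.OrR) (chi a) f"
      unfolding chi_def using chrom_ex[OF rg_simple[OF finW]] by blast
    then obtain F where F: "\<And>a. colors (W a) (rg (W a) H.OrR) (chi a) (F a)" by metis
    define M where "M = Max (insert 0 (chi ` {..<q}))"
    have finM: "finite (insert 0 (chi ` {..<q}))" by simp
    define col where "col u = F (g u) u * q + g u" for u
    have gq: "g u < q" if "u \<in> Z" for u using g that unfolding colors_def by blast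
    have colmod: "col u mod q = g u" "col u div q = F (g u) u" if "u \<in> Z" for u
      using gq[OF that] unfolding col_def by simp_all
    have colors_Z: "colors Z (rg Z H.OrR) (M * q) col"
      unfolding colors_def
    proof (intro conjI allI impI ballI)
      fix u assume u: "u \<in> Z"
      have "u \<in> W (g u)" unfolding W_def using u by simp
      then have "F (g u) u < chi (g u)" using F unfolding colors_def by blast
      also have "chi (g u) \<le> M" unfolding M_def using gq[OF u] finM by (intro Max_ge) auto
      finally have "F (g u) u + 1 \<le> M" by simp
      then have "(F (g u) u + 1) * q \<le> M * q" by (rule mult_le_mono1)
      then show "col u < M * q" unfolding col_def using gq[OF u] by simp
    next
      fix x y assume e: "{x, y} \<in> rg Z H.OrR"
      then have xy: "x \<in> Z" "y \<in> Z" "x \<noteq> y" "H.OrR x y \<or> H.OrR y x" by (simp_all add: rg_mem)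
      show "col x \<noteq> col y"
      proof
        assume eq: "col x = col y"
        then have gg: "g x = g y" using colmod xy by metis
        have FF: "F (g x) x = F (g x) y" using colmod xy eq gg by metis
        have "x \<in> W (g x)" "y \<in> W (g x)" unfolding W_def using xy gg by auto
        then have "{x,y} \<in> rg (W (g x)) H.OrR" using xy by (simp add: rg_mem)
        then have "F (g x) x \<noteq> F (g x) y" using F[of "g x"] unfolding colors_def by blast
        then show False using FF by simp
      qed
    qed
    have cM: "c \<le> M * q" using H.cov_or[OF surj colors_Z] assms(2) by simp
    have sM: "sqrt (real c) \<le> real M" by (rule real_arith_step[OF cM False])
    have "M \<noteq> 0" using sM False by (metis not_le of_nat_0 order_le_less_trans of_nat_0_le_iff)
    moreover have "M \<in> insert 0 (chi ` {..<q})" unfolding M_def using finM by (intro Max_in) auto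
    ultimately obtain a where a: "a < q" "chi a = M" by auto
    have WZ: "W a \<subseteq> Z" unfolding W_def by blast
    have ind: "\<not> H.AndR u v" if "u \<in> W a" "v \<in> W a" "u \<noteq> v" for u v
    proof
      assume "H.AndR u v"
      then have "{u,v} \<in> GA" unfolding GA_def using that WZ by (auto simp: rg_mem)
      then have "g u \<noteq> g v" using g unfolding colors_def by blast
      then show False using that unfolding W_def by simp
    qed
    have "simple_graph (W a) (rg (W a) H.OrR)" by (rule rg_simple[OF finW])
    moreover have "card (W a) \<le> 2 ^ (2 * t)"
      using card_mono[OF finZ WZ] cardZ by linarith
    moreover have "bp (W a) (rg (W a) H.OrR) \<le> m ^ 2"
      using H.bp_or[OF WZ ind] by (simp add: power2_eq_square) (meson le_square order_trans)
    moreover have "real (chromatic_number (W a) (rg (W a) H.OrR)) \<ge> sqrt (real c)"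
      using sM a(2) unfolding chi_def by simp
    ultimately show ?thesis by blast
  qed
qed

end
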